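(* For every integer $k\ge 1$ there exists a $2$-connected (finite, simple) graph $G_k$ with pathwidth at least $k$ and cocircumference at most $2k$.
   Context: A bond of a graph $G$ is an inclusion-wise minimal set of edges $F$ such that $G-F$ has more connected components than $G$; the cocircumference is the maximum size of a bond. A path-decomposition of $G$ is a sequence $(X_0,\dots,X_s)$ of subsets of $V(G)$ such that for each vertex $x$ the indices $i$ with $x\in X_i$ form a non-empty interval, and each edge has both ends in some $X_i$; its width is $\max_i|X_i|-1$, and the pathwidth is the minimum width of a path-decomposition. *)

theory Defs
  imports Main
begin

definition simple_graph :: "'a set \<Rightarrow> 'a set set \<Rightarrow> bool" where
  "simple_graph V E \<longleftrightarrow> finite V \<and>
     (\<forall>e\<in>E. \<exists>u v. u \<in> V \<and> v \<in> V \<and> u \<noteq> v \<and> e = {u, v})"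

definition adj :: "'a set set \<Rightarrow> 'a \<Rightarrow> 'a \<Rightarrow> bool" where
  "adj E u v \<longleftrightarrow> {u, v} \<in> E"

definition reach :: "'a set \<Rightarrow> 'a set set \<Rightarrow> 'a \<Rightarrow> 'a \<Rightarrow> bool" where
  "reach V E u v \<longleftrightarrow> u \<in> V \<and> v \<in> V \<and> (adj E)\<^sup>*\<^sup>* u v"

definition components :: "'a set \<Rightarrow> 'a set set \<Rightarrow> 'a set set" where
  "components V E = V // {(u, v). reach V E u v}"

definition num_components :: "'a set \<Rightarrow> 'a set set \<Rightarrow> nat" where
  "num_components V E = card (components V E)"

definition connected_graph :: "'a set \<Rightarrow> 'a set set \<Rightarrow> bool" where
  "connected_graph V E \<longleftrightarrow> V \<noteq> {} \<and> (\<forall>u\<in>V. \<forall>v\<in>V. reach V E u v)"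

definition del_verts_E :: "'a set set \<Rightarrow> 'a set \<Rightarrow> 'a set set" where
  "del_verts_E E X = {e \<in> E. e \<inter> X = {}}"

definition two_connected :: "'a set \<Rightarrow> 'a set set \<Rightarrow> bool" where
  "two_connected V E \<longleftrightarrow> card V > 2 \<and>
     (\<forall>X \<subseteq> V. card X < 2 \<longrightarrow> connected_graph (V - X) (del_verts_E E X))"

definition separating :: "'a set \<Rightarrow> 'a set set \<Rightarrow> 'a set set \<Rightarrow> bool" where
  "separating V E F \<longleftrightarrow> F \<subseteq> E \<and> num_components V (E - F) > num_components V E"

definition bond :: "'a set \<Rightarrow> 'a set set \<Rightarrow> 'a set set \<Rightarrow> bool" where
  "bond V E F \<longleftrightarrow> separating V E F \<and> (\<forall>F' \<subset> F. \<not> separating V E F')"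

definition cocircumference :: "'a set \<Rightarrow> 'a set set \<Rightarrow> nat" where
  "cocircumference V E = Max (insert 0 {card F | F. bond V E F})"

definition path_decomp :: "'a set \<Rightarrow> 'a set set \<Rightarrow> 'a set list \<Rightarrow> bool" where
  "path_decomp V E Xs \<longleftrightarrow> Xs \<noteq> [] \<and> (\<forall>X\<in>set Xs. X \<subseteq> V) \<and>
     (\<forall>x\<in>V. (\<exists>i < length Xs. x \<in> Xs ! i) \<and>
        (\<forall>i j l. i \<le> l \<and> l \<le> j \<and> j < length Xs \<and> x \<in> Xs ! i \<and> x \<in> Xs ! j
            \<longrightarrow> x \<in> Xs ! l)) \<and>
     (\<forall>u v. {u, v} \<in> E \<longrightarrow> (\<exists>i < length Xs. u \<in> Xs ! i \<and> v \<in> Xs ! i))"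

definition pd_width :: "'a set list \<Rightarrow> nat" where
  "pd_width Xs = Max (card ` set Xs) - 1"

definition pathwidth :: "'a set \<Rightarrow> 'a set set \<Rightarrow> nat" where
  "pathwidth V E = (LEAST w. \<exists>Xs. path_decomp V E Xs \<and> pd_width Xs = w)"

end

theory Submission
  imports Defs
begin


definition pathE :: "nat \<Rightarrow> nat set set" where
  "pathE n = {{i, Suc i} | i. Suc i < n}"
definition chord :: "nat \<Rightarrow> nat \<Rightarrow> nat set" where
  "chord i m = {(3*m+1)*3^i - 1, (3*m+2)*3^i}"
definition chords :: "nat \<Rightarrow> nat set set" where
  "chords k = {chord i m | i m. i+2 \<le> k \<and> (3*m+3)*3^i \<le> (3::nat)^k}"
definition Ek :: "nat \<Rightarrow> nat set set" where
  "Ek k = pathE (3^k) \<union> {{0, 3^k - 1}} \<union> chords k"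

lemma chord_lt_t: "0 < t \<Longrightarrow> (3*m+1)*t - 1 < (3*m+2)*(t::nat)"
  by (simp add: algebra_simps)

lemma chord_lt: "(3*m+1)*3^i - 1 < (3*m+2)*(3::nat)^i"
  by (rule chord_lt_t) simp

lemma chord_lt2: "(3*m+3)*3^i \<le> (3::nat)^k \<Longrightarrow> (3*m+2)*(3::nat)^i < 3^k"
proof -
  assume a: "(3*m+3)*3^i \<le> (3::nat)^k"
  have "(0::nat) < 3^i" by simp
  then have "(3*m+2)*(3::nat)^i < (3*m+3)*3^i" by (simp add: algebra_simps)
  then show ?thesis using a by linarith
qed

lemma Ek_cases:
  assumes "{a,b} \<in> Ek k" "a < b"
  shows "b = Suc a \<or> (a = 0 \<and> b = 3^k - 1) \<or>
    (\<exists>i m. i+2 \<le> k \<and> (3*m+3)*3^i \<le> (3::nat)^k \<and> a = (3*m+1)*3^i - 1 \<and> b = (3*m+2)*3^i)"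
proof -
  have "{a,b} \<in> pathE (3^k) \<or> {a,b} = {0, 3^k - 1} \<or> {a,b} \<in> chords k"
    using assms(1) unfolding Ek_def by (metis Un_iff insertE empty_iff)
  then show ?thesis
  proof (elim disjE)
    assume "{a,b} \<in> pathE (3^k)"
    then obtain i where "{a,b} = {i, Suc i}" unfolding pathE_def by auto
    then show ?thesis using assms(2) by (simp add: doubleton_eq_iff) arith
  next
    assume "{a,b} = {0, 3^k - 1}"
    then show ?thesis using assms(2) by (simp add: doubleton_eq_iff)
  next
    assume "{a,b} \<in> chords k"
    then obtain i m where im: "i+2 \<le> k" "(3*m+3)*3^i \<le> (3::nat)^k" "{a,b} = chord i m"
      unfolding chords_def by auto
    have "a = (3*m+1)*3^i - 1 \<and> b = (3*m+2)*3^i"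
      using im(3) assms(2) chord_lt[of m i] unfolding chord_def doubleton_eq_iff by linarith
    then show ?thesis using im by blast
  qed
qed

lemma three_le_pow: "k \<ge> 1 \<Longrightarrow> 3 \<le> (3::nat)^k"
  using power_increasing[of 1 k "3::nat"] by simp

lemma Ek_bound:
  assumes "e \<in> Ek k" "k \<ge> 1"
  shows "\<exists>a b. e = {a,b} \<and> a < b \<and> b < 3^k"
proof -
  have k3: "3 \<le> (3::nat)^k" using assms(2) by (rule three_le_pow)
  consider "e \<in> pathE (3^k)" | "e = {0, 3^k - 1}" | "e \<in> chords k"
    using assms(1) unfolding Ek_def by blast
  then show ?thesis
  proof cases
    case 1
    then show ?thesis unfolding pathE_def by auto
  next
    case 2
    then show ?thesis using k3 by (intro exI[of _ 0] exI[of _ "3^k - 1"]) auto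
  next
    case 3
    then obtain i m where im: "i+2 \<le> k" "(3*m+3)*3^i \<le> (3::nat)^k" "e = chord i m"
      unfolding chords_def by blast
    show ?thesis
      by (rule exI[of _ "(3*m+1)*3^i - 1"], rule exI[of _ "(3*m+2)*3^i"])
         (use im chord_lt[of m i] chord_lt2[OF im(2)] in \<open>simp add: chord_def\<close>)
  qed
qed



lemma nc_arith:
  assumes h1: "(3*m1+1)*3^i1 - 1 < (3*m2+1)*3^i2 - (1::nat)"
    and h2: "(3*m2+1)*3^i2 - 1 < (3*m1+2)*(3::nat)^i1"
    and h3: "(3*m1+2)*3^i1 < (3*m2+2)*(3::nat)^i2"
  shows False
proof -
  define t1 :: nat where "t1 = 3^i1"
  define t2 :: nat where "t2 = 3^i2"
  have t1p: "t1 \<ge> 1" "t2 \<ge> 1" unfolding t1_def t2_def by simp_all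
  have a1: "(3*m1+1)*t1 \<ge> 1" "(3*m2+1)*t2 \<ge> 1" using t1p by simp_all
  have g1: "(3*m1+1)*t1 < (3*m2+1)*t2" using h1 a1 unfolding t1_def[symmetric] t2_def[symmetric] by linarith
  have g2: "(3*m2+1)*t2 \<le> (3*m1+2)*t1" using h2 a1 unfolding t1_def[symmetric] t2_def[symmetric] by linarith
  have g3: "(3*m1+2)*t1 < (3*m2+2)*t2" using h3 unfolding t1_def[symmetric] t2_def[symmetric] .
  show False
  proof (cases "i1 \<le> i2")
    case True
    define P :: nat where "P = 3^(i2-i1)"
    have t2e': "(3*m2+1)*t2 = (P*(3*m2+1)) * t1" unfolding P_def t1_def t2_def
      using True by (simp add: power_add[symmetric] algebra_simps)
    have "3*m1+1 < P*(3*m2+1)" using g1 t2e' t1p by (metis mult_less_cancel2)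
    moreover have "P*(3*m2+1) \<le> 3*m1+2"
    proof -
      have "(P*(3*m2+1))*t1 \<le> (3*m1+2)*t1" using g2 t2e' by simp
      from mult_le_cancel2[THEN iffD1, OF this] t1p show ?thesis by simp
    qed
    ultimately have eq: "P*(3*m2+1) = 3*m1+2" by linarith
    show False
    proof (cases "i1 = i2")
      case True
      then have "P = 1" unfolding P_def by simp
      then show False using eq by presburger
    next
      case False
      then have "P = 3 * 3^(i2-i1-1)" unfolding P_def using \<open>i1 \<le> i2\<close>
        by (metis Suc_diff_Suc le_neq_implies_less power_Suc zero_less_diff diff_Suc_1 Suc_pred)
      then have "3 * (3^(i2-i1-1) * (3*m2+1)) = 3*m1+2" using eq by (simp add: algebra_simps)
      then show False by presburger
    qed
  next
    case False
    define P :: nat where "P = 3^(i1-i2)"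
    have t1e': "(3*m1+2)*t1 = (P*(3*m1+2)) * t2" unfolding P_def t1_def t2_def
      using False by (simp add: power_add[symmetric] algebra_simps)
    have "3*m2+1 \<le> P*(3*m1+2)"
    proof -
      have "(3*m2+1)*t2 \<le> (P*(3*m1+2))*t2" using g2 t1e' by simp
      from mult_le_cancel2[THEN iffD1, OF this] t1p show ?thesis by simp
    qed
    moreover have "P*(3*m1+2) < 3*m2+2" using g3 t1e' t1p by (metis mult_less_cancel2)
    ultimately have eq: "P*(3*m1+2) = 3*m2+1" by linarith
    have "P = 3 * 3^(i1-i2-1)" unfolding P_def using False
      by (metis Suc_diff_Suc not_le power_Suc zero_less_diff diff_Suc_1 Suc_pred)
    then have "3 * (3^(i1-i2-1) * (3*m1+2)) = 3*m2+1" using eq by (simp add: algebra_simps)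
    then show False by presburger
  qed
qed



lemma Ek_lt: assumes "{a,b} \<in> Ek k" "a < b" "k \<ge> 1" shows "b < 3^k"
proof -
  obtain x y where "{a,b} = {x,y}" "x < y" "y < 3^k" using Ek_bound[OF assms(1,3)] by blast
  then show ?thesis using assms(2) by (auto simp: doubleton_eq_iff)
qed

lemma Ek_nc:
  assumes ab: "{a,b} \<in> Ek k" and cd: "{c,d} \<in> Ek k" and o: "a < c" "c < b" "b < d" and k: "k \<ge> 1"
  shows False
proof -
  have dk: "d < 3^k" using Ek_lt[OF cd] o k by simp
  have lab: "a < b" using o by simp
  from Ek_cases[OF ab lab] have A: "b = Suc a \<or> (a = 0 \<and> b = 3^k - 1) \<or>
    (\<exists>i m. i+2 \<le> k \<and> (3*m+3)*3^i \<le> (3::nat)^k \<and> a = (3*m+1)*3^i - 1 \<and> b = (3*m+2)*3^i)" .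
  have lcd: "c < d" using o by simp
  from Ek_cases[OF cd lcd] have C: "d = Suc c \<or> (c = 0 \<and> d = 3^k - 1) \<or>
    (\<exists>i m. i+2 \<le> k \<and> (3*m+3)*3^i \<le> (3::nat)^k \<and> c = (3*m+1)*3^i - 1 \<and> d = (3*m+2)*3^i)" .
  show False
  proof -
    have "b \<noteq> Suc a" using o by linarith
    moreover have "d \<noteq> Suc c" using o by linarith
    moreover have "\<not> (a = 0 \<and> b = 3^k - 1)" using o dk by linarith
    moreover have "c \<noteq> 0" using o by linarith
    ultimately obtain i1 m1 i2 m2 where
      "a = (3*m1+1)*3^i1 - 1" "b = (3*m1+2)*3^i1" "c = (3*m2+1)*3^i2 - 1" "d = (3*m2+2)*3^i2"
      using A C by blast
    then show False using o nc_arith[of m1 i1 m2 i2] by simp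
  qed
qed



definition adjR :: "'a set set \<Rightarrow> 'a set \<Rightarrow> 'a \<Rightarrow> 'a \<Rightarrow> bool" where
  "adjR E W x y \<longleftrightarrow> {x,y} \<in> E \<and> x \<in> W \<and> y \<in> W"
definition conn :: "'a set set \<Rightarrow> 'a set \<Rightarrow> bool" where
  "conn E W \<longleftrightarrow> (\<forall>x\<in>W. \<forall>y\<in>W. (adjR E W)\<^sup>*\<^sup>* x y)"
definition ecut :: "'a set set \<Rightarrow> 'a set \<Rightarrow> 'a set set" where
  "ecut E P = {e \<in> E. \<exists>p q. e = {p,q} \<and> p \<in> P \<and> q \<notin> P}"

lemma rtranclp_sym_gen:
  assumes "\<And>x y. r x y \<Longrightarrow> r y x" "r\<^sup>*\<^sup>* x y" shows "r\<^sup>*\<^sup>* y x"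
  using assms(2)
proof (induction rule: rtranclp_induct)
  case base then show ?case by simp
next
  case (step y z)
  then show ?case using assms(1) by (meson converse_rtranclp_into_rtranclp)
qed

lemma adjR_sym: "adjR E W x y \<Longrightarrow> adjR E W y x"
  unfolding adjR_def by (simp add: insert_commute)

lemma adj_sym: "adj E x y \<Longrightarrow> adj E y x"
  unfolding adj_def by (simp add: insert_commute)

lemma adjR_rt_sym: "(adjR E W)\<^sup>*\<^sup>* x y \<Longrightarrow> (adjR E W)\<^sup>*\<^sup>* y x"
  using rtranclp_sym_gen[of "adjR E W"] adjR_sym by metis

lemma adj_rt_sym: "(adj E)\<^sup>*\<^sup>* x y \<Longrightarrow> (adj E)\<^sup>*\<^sup>* y x"
  using rtranclp_sym_gen[of "adj E"] adj_sym by metis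

lemma walk_cross:
  assumes "r\<^sup>*\<^sup>* x y" "P x" "\<not> P y"
  shows "\<exists>p q. r p q \<and> P p \<and> \<not> P q"
  using assms
proof (induction rule: rtranclp_induct)
  case base then show ?case by simp
next
  case (step y z)
  then show ?case by blast
qed

lemma conn_from:
  assumes "\<And>x. x \<in> W \<Longrightarrow> (adjR E W)\<^sup>*\<^sup>* v x"
  shows "conn E W"
  unfolding conn_def
  using assms adjR_rt_sym by (meson rtranclp_trans)

lemma num_comp_one:
  assumes "V \<noteq> {}" "\<forall>u\<in>V. \<forall>v\<in>V. (adj E)\<^sup>*\<^sup>* u v"
  shows "num_components V E = 1"
proof -
  have R: "{(u, v). reach V E u v} = V \<times> V" using assms(2) unfolding reach_def by auto
  have "V // (V \<times> V) = {V}"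
    using assms(1) unfolding quotient_def by auto
  then show ?thesis unfolding num_components_def components_def R by simp
qed

lemma num_comp_two:
  assumes "finite V" "u \<in> V" "v \<in> V" "\<not> (adj E)\<^sup>*\<^sup>* u v"
  shows "num_components V E \<ge> 2"
proof -
  define R where "R = {(u, v). reach V E u v}"
  have ru: "R``{u} \<in> V // R" "R``{v} \<in> V // R" using assms(2,3) by (simp_all add: quotientI)
  have "(u,u) \<in> R" using assms(2) unfolding R_def reach_def by simp
  then have "u \<in> R``{u}" by simp
  moreover have "(v,u) \<notin> R"
  proof
    assume "(v,u) \<in> R"
    then have "(adj E)\<^sup>*\<^sup>* v u" unfolding R_def reach_def by simp
    then show False using assms(4) adj_rt_sym by metis
  qed
  then have "u \<notin> R``{v}" by simp
  ultimately have ne: "R``{u} \<noteq> R``{v}" by metis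
  have sub: "X \<subseteq> V" if "X \<in> V // R" for X
    using that by (auto elim!: quotientE simp: R_def reach_def)
  have fin: "finite (V // R)"
  proof -
    have "V // R \<subseteq> Pow V" using sub by blast
    then show ?thesis using assms(1) finite_subset by blast
  qed
  have "card {R``{u}, R``{v}} \<le> card (V // R)" using ru fin by (intro card_mono) auto
  then have "2 \<le> card (V // R)" using ne by simp
  then show ?thesis unfolding num_components_def components_def R_def by simp
qed

lemma not_all_reach:
  assumes "V \<noteq> {}" "num_components V E \<noteq> 1"
  shows "\<exists>u\<in>V. \<exists>v\<in>V. \<not> (adj E)\<^sup>*\<^sup>* u v"
proof (rule ccontr)
  assume "\<not> (\<exists>u\<in>V. \<exists>v\<in>V. \<not> (adj E)\<^sup>*\<^sup>* u v)"
  then have "\<forall>u\<in>V. \<forall>v\<in>V. (adj E)\<^sup>*\<^sup>* u v" by simp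
  then show False using num_comp_one[OF assms(1)] assms(2) by simp
qed

lemma bond_cut:
  assumes sg: "\<forall>e\<in>E. \<exists>a b. e = {a,b} \<and> a \<in> V \<and> b \<in> V"
    and fin: "finite V" and ne: "V \<noteq> {}"
    and con: "\<forall>u\<in>V. \<forall>v\<in>V. (adj E)\<^sup>*\<^sup>* u v"
    and bd: "bond V E F"
  shows "\<exists>T. T \<subseteq> V \<and> T \<noteq> {} \<and> V - T \<noteq> {} \<and> conn E T \<and> conn E (V - T) \<and> F = ecut E T"
proof -
  have inV: "\<And>p q. {p,q} \<in> E \<Longrightarrow> p \<in> V \<and> q \<in> V"
    using sg by (metis doubleton_eq_iff)
  have n1: "num_components V E = 1" using num_comp_one[OF ne con] .
  have FE: "F \<subseteq> E" and nF: "num_components V (E - F) > 1"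
    using bd n1 unfolding bond_def separating_def by auto
  have mini: "\<And>F'. F' \<subset> F \<Longrightarrow> \<not> separating V E F'" using bd unfolding bond_def by blast
  obtain u v where uv: "u \<in> V" "v \<in> V" "\<not> (adj (E - F))\<^sup>*\<^sup>* u v"
    using not_all_reach[OF ne, of "E - F"] nF by auto
  define S where "S = {w \<in> V. (adj (E - F))\<^sup>*\<^sup>* u w}"
  define T where "T = {w \<in> V - S. (adjR E (V - S))\<^sup>*\<^sup>* v w}"
  have uS: "u \<in> S" unfolding S_def using uv by simp
  have vS: "v \<notin> S" unfolding S_def using uv by simp
  have vT: "v \<in> T" unfolding T_def using uv vS by simp
  have TV: "T \<subseteq> V - S" unfolding T_def by auto
  have uT: "u \<notin> T" using uS TV by auto
  have key: "q \<in> S \<and> {p,q} \<in> F" if pq: "{p,q} \<in> E" "p \<in> T" "q \<notin> T" for p q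
  proof -
    have pq2: "p \<in> V" "q \<in> V" using inV[OF pq(1)] by auto
    have qS: "q \<in> S"
    proof (rule ccontr)
      assume "q \<notin> S"
      then have "adjR E (V - S) p q" using pq pq2 TV unfolding adjR_def by auto
      moreover have "(adjR E (V - S))\<^sup>*\<^sup>* v p" using pq(2) unfolding T_def by simp
      ultimately have "(adjR E (V - S))\<^sup>*\<^sup>* v q" by simp
      then show False using pq(3) \<open>q \<notin> S\<close> pq2 unfolding T_def by simp
    qed
    moreover have "{p,q} \<in> F"
    proof (rule ccontr)
      assume "{p,q} \<notin> F"
      then have "adj (E - F) q p" using pq(1) unfolding adj_def by (simp add: insert_commute)
      moreover have "(adj (E - F))\<^sup>*\<^sup>* u q" using qS unfolding S_def by simp
      ultimately have "(adj (E - F))\<^sup>*\<^sup>* u p" by simp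
      then have "p \<in> S" using pq2 unfolding S_def by simp
      then show False using pq(2) TV by auto
    qed
    ultimately show ?thesis by simp
  qed
  have cutF: "ecut E T \<subseteq> F" unfolding ecut_def using key by blast
  have stayT: "w \<in> T" if "(adj (E - ecut E T))\<^sup>*\<^sup>* v w" for w
    using that
  proof (induction rule: rtranclp_induct)
    case base then show ?case using vT by simp
  next
    case (step y z)
    then have "{y,z} \<in> E" "{y,z} \<notin> ecut E T" unfolding adj_def by auto
    then show ?case using step.IH unfolding ecut_def by blast
  qed
  have "num_components V (E - ecut E T) \<ge> 2"
    using num_comp_two[OF fin uv(2) uv(1)] stayT uT by blast
  then have sepT: "separating V E (ecut E T)" unfolding separating_def ecut_def n1 by auto
  have Fc: "F = ecut E T" using mini[of "ecut E T"] sepT cutF by blast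
  have connT: "conn E T"
  proof (rule conn_from[of _ _ v])
    fix x assume "x \<in> T"
    then have "(adjR E (V - S))\<^sup>*\<^sup>* v x" unfolding T_def by simp
    then show "(adjR E T)\<^sup>*\<^sup>* v x"
    proof (induction rule: rtranclp_induct)
      case base then show ?case by simp
    next
      case (step y z)
      have "(adjR E (V - S))\<^sup>*\<^sup>* v z" using step.hyps by simp
      then have "z \<in> T" "y \<in> T" using step.hyps(2) step.hyps(1) unfolding T_def adjR_def by auto
      then have "adjR E T y z" using step.hyps(2) unfolding adjR_def by simp
      then show ?case using step.IH by simp
    qed
  qed
  have Sreach: "z \<in> V \<and> (adjR E (V - T))\<^sup>*\<^sup>* u z" if "(adj (E - F))\<^sup>*\<^sup>* u z" for z
    using that
  proof (induction rule: rtranclp_induct)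
    case base then show ?case using uv by simp
  next
    case (step y z)
    have yz: "{y,z} \<in> E" using step.hyps(2) unfolding adj_def by simp
    then have zV: "z \<in> V" using inV by blast
    have "y \<in> S" "z \<in> S" using step zV unfolding S_def by auto
    then have "adjR E (V - T) y z" using yz TV inV[OF yz] unfolding adjR_def by auto
    then show ?case using step.IH zV by (meson rtranclp.rtrancl_into_rtrancl)
  qed
  have bk: "z \<in> V \<longrightarrow> z \<in> T \<or> (adjR E (V - T))\<^sup>*\<^sup>* z u" if "(adj E)\<^sup>*\<^sup>* z u" for z
    using that
  proof (induction rule: converse_rtranclp_induct)
    case base then show ?case by simp
  next
    case (step z z')
    have zz: "{z,z'} \<in> E" using step.hyps(1) unfolding adj_def by simp
    have zV: "z \<in> V" "z' \<in> V" using inV[OF zz] by auto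
    show ?case
    proof (intro impI)
      show "z \<in> T \<or> (adjR E (V - T))\<^sup>*\<^sup>* z u"
      proof (cases "z \<in> T")
        case True then show ?thesis by simp
      next
        case zT: False
        show ?thesis
        proof (cases "z' \<in> T")
          case False
          then have "adjR E (V - T) z z'" using zz zV zT unfolding adjR_def by simp
          then show ?thesis using step.IH zV False by (meson converse_rtranclp_into_rtranclp)
        next
          case True
          have "{z',z} \<in> E" using zz by (simp add: insert_commute)
          then have "z \<in> S" using key[of z' z] True zT by blast
          then have "(adj (E - F))\<^sup>*\<^sup>* u z" unfolding S_def by simp
          then have "(adjR E (V - T))\<^sup>*\<^sup>* u z" using Sreach by blast
          then show ?thesis by (simp add: adjR_rt_sym)
        qed
      qed
    qed
  qed
  have connVT: "conn E (V - T)"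
  proof (rule conn_from[of _ _ u])
    fix x assume x: "x \<in> V - T"
    then have "(adj E)\<^sup>*\<^sup>* x u" using con uv by blast
    then have "(adjR E (V - T))\<^sup>*\<^sup>* x u" using bk x by blast
    then show "(adjR E (V - T))\<^sup>*\<^sup>* u x" by (rule adjR_rt_sym)
  qed
  show ?thesis
    using TV vT uT uv(1) connT connVT Fc by (intro exI[of _ T]) auto
qed



definition NC :: "nat set set \<Rightarrow> bool" where
  "NC E \<longleftrightarrow> (\<forall>a b c d. {a,b} \<in> E \<longrightarrow> {c,d} \<in> E \<longrightarrow> a < c \<longrightarrow> c < b \<longrightarrow> b < d \<longrightarrow> False)"

lemma sep_edge:
  assumes nc: "NC E" and e: "{lo,hi} \<in> E" "lo < hi" and cP: "conn E P"
    and xy: "x \<in> P" "y \<in> P" "lo \<notin> P" "hi \<notin> P" "lo < x" "x < hi" "\<not> (lo < y \<and> y < hi)"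
  shows False
proof -
  have "(adjR E P)\<^sup>*\<^sup>* x y" using cP xy unfolding conn_def by blast
  from walk_cross[OF this, of "\<lambda>z. lo < z \<and> z < hi"] xy
  obtain p q where pq: "adjR E P p q" "lo < p" "p < hi" "\<not> (lo < q \<and> q < hi)" by blast
  have pqE: "{p,q} \<in> E" "q \<in> P" using pq(1) unfolding adjR_def by auto
  have "q \<noteq> lo" "q \<noteq> hi" using pqE(2) xy by auto
  then consider "q < lo" | "hi < q" using pq by linarith
  then show False
  proof cases
    case 1
    have "{q,p} \<in> E" using pqE by (simp add: insert_commute)
    then show False using nc e 1 pq unfolding NC_def by blast
  next
    case 2
    then show False using nc e pqE pq unfolding NC_def by blast
  qed
qed

lemma interleave:
  assumes nc: "NC E" and o: "a < b" "b < c" "c < d"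
    and cP: "conn E P" and cQ: "conn E Q" and disj: "P \<inter> Q = {}"
    and m: "a \<in> P" "c \<in> P" "b \<in> Q" "d \<in> Q"
  shows False
proof -
  have "(adjR E P)\<^sup>*\<^sup>* a c" using cP m unfolding conn_def by blast
  from walk_cross[OF this, of "\<lambda>z. \<not> (b < z \<and> z < d)"] o
  obtain p q where pq: "adjR E P p q" "\<not> (b < p \<and> p < d)" "b < q" "q < d" by auto
  have pqE: "{p,q} \<in> E" "p \<in> P" "q \<in> P" using pq(1) unfolding adjR_def by auto
  have nQ: "p \<notin> Q" "q \<notin> Q" using pqE disj by auto
  have "p \<noteq> b" "p \<noteq> d" using nQ m by auto
  then consider "p < b" | "d < p" using pq by linarith
  then show False
  proof cases
    case 1
    show False
      by (rule sep_edge[OF nc pqE(1) _ cQ m(3) m(4) nQ]) (use 1 pq in auto)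
  next
    case 2
    have "{q,p} \<in> E" using pqE by (simp add: insert_commute)
    show False
      by (rule sep_edge[OF nc \<open>{q,p} \<in> E\<close> _ cQ m(4) m(3) nQ(2) nQ(1)]) (use 2 pq o in auto)
  qed
qed

lemma arc:
  assumes nc: "NC E" and cA: "conn E A" and cB: "conn E ({..<N} - A)"
    and sub: "A \<subseteq> {..<N}" and z: "0 \<notin> A" and ne: "A \<noteq> {}"
  shows "\<exists>x y. A = {x..y} \<and> 1 \<le> x \<and> x \<le> y \<and> y < N"
proof -
  have fin: "finite A" using sub finite_subset by blast
  define x where "x = Min A"
  define y where "y = Max A"
  have xA: "x \<in> A" "y \<in> A" unfolding x_def y_def using fin ne by auto
  have xy: "\<And>z. z \<in> A \<Longrightarrow> x \<le> z \<and> z \<le> y" unfolding x_def y_def using fin by auto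
  have x1: "1 \<le> x" using xA z by (cases x) auto
  have yN: "y < N" using xA sub by auto
  have "A = {x..y}"
  proof
    show "A \<subseteq> {x..y}" using xy by auto
  next
    show "{x..y} \<subseteq> A"
    proof
      fix w assume w: "w \<in> {x..y}"
      show "w \<in> A"
      proof (rule ccontr)
        assume wA: "w \<notin> A"
        then have "x < w" "w < y" using w xA by (auto simp: order.order_iff_strict)
        moreover have "0 \<in> {..<N} - A" "w \<in> {..<N} - A" using z wA yN w by auto
        ultimately show False
          using interleave[OF nc _ _ _ cB cA _ _ _ xA(1) xA(2), of 0 w] x1 by auto
      qed
    qed
  qed
  then show ?thesis using x1 yN xy xA by auto
qed



lemma div_arith:
  assumes t: "0 < (t::nat)" and h1: "(3*m+1)*t - 1 \<le> g" and h2: "g < (3*m+2)*t"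
  shows "g div t div 3 = m"
proof -
  have "g div t div 3 = g div (t*3)" by (simp add: div_mult2_eq)
  also have "\<dots> = m"
  proof (rule div_nat_eqI)
    have "(3*m+1)*t - 1 = 3*(m*t) + t - 1" by (simp add: algebra_simps)
    then show "t * 3 * m \<le> g" using h1 t by (simp add: algebra_simps)
    have "(3*m+2)*t \<le> t * 3 * Suc m" by (simp add: algebra_simps)
    then show "g < t * 3 * Suc m" using h2 by linarith
  qed
  finally show ?thesis .
qed

definition span :: "nat \<Rightarrow> nat \<Rightarrow> nat set set" where
  "span k g = {c \<in> chords k. \<exists>a b. c = {a,b} \<and> a \<le> g \<and> g < b}"

lemma span_sub: "span k g \<subseteq> (\<lambda>i. chord i (g div 3^i div 3)) ` {..<k-1}"
proof
  fix c assume "c \<in> span k g"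
  then obtain i m a b where im: "i+2 \<le> k" "(3*m+3)*3^i \<le> (3::nat)^k" "c = chord i m"
    and ab: "c = {a,b}" "a \<le> g" "g < b"
    unfolding span_def chords_def by blast
  have lt: "(3*m+1)*3^i - 1 < (3*m+2)*(3::nat)^i" by (rule chord_lt)
  have "{a,b} = {(3*m+1)*3^i - 1, (3*m+2)*3^i}" using ab im(3) unfolding chord_def by simp
  then have "(a = (3*m+1)*3^i - 1 \<and> b = (3*m+2)*3^i) \<or> (a = (3*m+2)*3^i \<and> b = (3*m+1)*3^i - 1)"
    by (rule doubleton_eq_iff[THEN iffD1])
  then have "a = (3*m+1)*3^i - 1 \<and> b = (3*m+2)*3^i" using ab lt by linarith
  then have "g div 3^i div 3 = m" using ab by (intro div_arith) auto
  then show "c \<in> (\<lambda>i. chord i (g div 3^i div 3)) ` {..<k-1}" using im by force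
qed

lemma span_card: "card (span k g) \<le> k - 1" and span_fin: "finite (span k g)"
proof -
  have "card (span k g) \<le> card ((\<lambda>i. chord i (g div 3^i div 3)) ` {..<k-1})"
    by (rule card_mono[OF _ span_sub]) simp
  also have "\<dots> \<le> card {..<k-1}" by (rule card_image_le) simp
  finally show "card (span k g) \<le> k - 1" by simp
  show "finite (span k g)" by (rule finite_subset[OF span_sub]) simp
qed

lemma cut_interval:
  assumes k: "k \<ge> 1" and xy: "1 \<le> x" "x \<le> y" "y < 3^k"
  shows "card (ecut (Ek k) {x..y}) \<le> 2*k"
proof -
  define R where "R = (if y = 3^k - 1 then {0, 3^k - 1} else {y, Suc y})"
  have sub: "ecut (Ek k) {x..y} \<subseteq> {{x-1, x}, R} \<union> span k (x-1) \<union> span k y"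
  proof
    fix e assume e: "e \<in> ecut (Ek k) {x..y}"
    then obtain p q where pq: "e \<in> Ek k" "e = {p,q}" "p \<in> {x..y}" "q \<notin> {x..y}"
      unfolding ecut_def by blast
    obtain a b where ab: "e = {a,b}" "a < b" "b < 3^k" using Ek_bound[OF pq(1) k] by blast
    have io: "(a \<in> {x..y} \<and> b \<notin> {x..y}) \<or> (a \<notin> {x..y} \<and> b \<in> {x..y})"
      using pq ab by (auto simp: doubleton_eq_iff)
    have eab: "{a,b} \<in> Ek k" using pq ab by simp
    from Ek_cases[OF eab ab(2)] consider "b = Suc a" | "a = 0 \<and> b = 3^k - 1"
      | "\<exists>i m. i+2 \<le> k \<and> (3*m+3)*3^i \<le> (3::nat)^k \<and> a = (3*m+1)*3^i - 1 \<and> b = (3*m+2)*3^i"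
      by blast
    then show "e \<in> {{x-1, x}, R} \<union> span k (x-1) \<union> span k y"
    proof cases
      case 1
      then consider "a = y" "b = Suc y" | "b = x" "a = x - 1" using io xy by auto
      then show ?thesis
      proof cases
        case 1
        then have "y \<noteq> 3^k - 1" using ab by linarith
        then show ?thesis using 1 ab unfolding R_def by simp
      next
        case 2 then show ?thesis using ab by simp
      qed
    next
      case 2
      then have "y = 3^k - 1" using io xy ab by auto
      then show ?thesis using 2 ab unfolding R_def by simp
    next
      case 3
      then obtain i m where im: "i+2 \<le> k" "(3*m+3)*3^i \<le> (3::nat)^k"
        "a = (3*m+1)*3^i - 1" "b = (3*m+2)*3^i" by blast
      have ec: "e \<in> chords k" unfolding chords_def chord_def using im ab by blast
      from io show ?thesis
      proof
        assume "a \<in> {x..y} \<and> b \<notin> {x..y}"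
        then have "a \<le> y" "y < b" using ab by auto
        then have "e \<in> span k y" unfolding span_def using ec ab by blast
        then show ?thesis by simp
      next
        assume "a \<notin> {x..y} \<and> b \<in> {x..y}"
        then have "a \<le> x - 1" "x - 1 < b" using xy ab by auto
        then have "e \<in> span k (x-1)" unfolding span_def using ec ab by blast
        then show ?thesis by simp
      qed
    qed
  qed
  have "card (ecut (Ek k) {x..y}) \<le> card ({{x-1, x}, R} \<union> span k (x-1) \<union> span k y)"
    by (rule card_mono[OF _ sub]) (simp add: span_fin)
  also have "\<dots> \<le> card ({{x-1, x}, R} \<union> span k (x-1)) + card (span k y)" by (rule card_Un_le)
  also have "\<dots> \<le> card {{x-1, x}, R} + card (span k (x-1)) + card (span k y)"
    using card_Un_le by (metis add_le_mono1)
  also have "\<dots> \<le> 2 + (k-1) + (k-1)"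
  proof -
    have "card {{x-1, x}, R} \<le> 2" by (simp add: card_insert_if)
    then show ?thesis using span_card[of k "x-1"] span_card[of k y] by linarith
  qed
  also have "\<dots> = 2*k" using k by simp
  finally show ?thesis .
qed



definition betw :: "nat \<Rightarrow> nat \<Rightarrow> nat \<Rightarrow> bool" where
  "betw i l j \<longleftrightarrow> (i \<le> l \<and> l \<le> j) \<or> (j \<le> l \<and> l \<le> i)"

lemma pd_conv:
  assumes pd: "path_decomp V E Xs" and x: "x \<in> V" "x \<in> Xs!i" "x \<in> Xs!j" "i < length Xs" "j < length Xs"
    and b: "betw i l j"
  shows "x \<in> Xs!l"
proof -
  have c: "\<And>i j l. i \<le> l \<Longrightarrow> l \<le> j \<Longrightarrow> j < length Xs \<Longrightarrow> x \<in> Xs!i \<Longrightarrow> x \<in> Xs!j \<Longrightarrow> x \<in> Xs!l"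
    using pd x(1) unfolding path_decomp_def by blast
  from b show ?thesis unfolding betw_def
  proof
    assume "i \<le> l \<and> l \<le> j" then show ?thesis using c x by blast
  next
    assume "j \<le> l \<and> l \<le> i" then show ?thesis using c x by blast
  qed
qed

lemma pd_edge:
  assumes pd: "path_decomp V E Xs" and "{u,v} \<in> E"
  shows "\<exists>i < length Xs. u \<in> Xs!i \<and> v \<in> Xs!i"
  using assms unfolding path_decomp_def by blast

lemma pd_walk:
  assumes pd: "path_decomp V E Xs" and CV: "C \<subseteq> V"
    and w: "(adjR E C)\<^sup>*\<^sup>* x y" and x: "x \<in> C" "x \<in> Xs!i1" "i1 < length Xs"
  shows "y \<in> Xs!i3 \<Longrightarrow> i3 < length Xs \<Longrightarrow> betw i1 i i3 \<Longrightarrow> \<exists>z\<in>C. z \<in> Xs!i"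
  using w
proof (induction arbitrary: i3 i rule: rtranclp_induct)
  case base
  then show ?case using pd_conv[OF pd _ x(2) base(1) x(3) base(2) base(3)] x CV by blast
next
  case (step y' y)
  have e: "{y',y} \<in> E" "y \<in> C" using step.hyps(2) unfolding adjR_def by auto
  obtain j where j: "j < length Xs" "y' \<in> Xs!j" "y \<in> Xs!j" using pd_edge[OF pd e(1)] by blast
  show ?case
  proof (cases "betw i1 i j")
    case True
    then show ?thesis using step.IH[OF j(2) j(1)] by blast
  next
    case False
    then have "betw j i i3" using step.prems(3) unfolding betw_def by linarith
    then have "y \<in> Xs!i" using pd_conv[OF pd _ j(3) step.prems(1) j(1) step.prems(2)] e CV by blast
    then show ?thesis using e by blast
  qed
qed

lemma mid:
  assumes pd: "path_decomp V E Xs" and CV: "C \<subseteq> V" and cC: "conn E C"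
    and QC: "Q \<inter> C = {}" and QB: "Q \<union> C \<subseteq> B" and fB: "finite B"
    and p: "p \<in> C" "p \<in> Xs!ip" "ip < length Xs" and r: "r \<in> C" "r \<in> Xs!ir" "ir < length Xs"
    and iq: "iq < length Xs" "betw ip iq ir"
    and cq: "j \<le> card (Xs!iq \<inter> Q)"
  shows "j + 1 \<le> card (Xs!iq \<inter> B)"
proof -
  have "(adjR E C)\<^sup>*\<^sup>* p r" using cC p r unfolding conn_def by blast
  then obtain z where z: "z \<in> C" "z \<in> Xs!iq" using pd_walk[OF pd CV _ p r(2) r(3) iq(2)] by blast
  have "insert z (Xs!iq \<inter> Q) \<subseteq> Xs!iq \<inter> B" using z QB by auto
  moreover have "z \<notin> Xs!iq \<inter> Q" using z QC by auto
  moreover have "finite (Xs!iq \<inter> Q)" using fB QB by (meson finite_Int finite_subset le_sup_iff)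
  ultimately have "card (Xs!iq \<inter> Q) + 1 \<le> card (Xs!iq \<inter> B)"
    by (metis Suc_eq_plus1 card_insert_disjoint card_mono fB finite_Int)
  then show ?thesis using cq by linarith
qed



lemma path_edge: "Suc i < 3^k \<Longrightarrow> {i, Suc i} \<in> Ek k"
  unfolding Ek_def pathE_def by blast

lemma close_edge: "{0, 3^k - 1} \<in> Ek k"
  unfolding Ek_def by blast

lemma interval_walk:
  assumes "\<And>i. lo \<le> i \<Longrightarrow> Suc i \<le> hi \<Longrightarrow> r i (Suc i)"
  shows "lo \<le> z \<Longrightarrow> z \<le> hi \<Longrightarrow> r\<^sup>*\<^sup>* lo z"
proof (induction z)
  case 0 then show ?case by simp
next
  case (Suc z)
  show ?case
  proof (cases "lo = Suc z")
    case True then show ?thesis by simp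
  next
    case False
    then have "lo \<le> z" using Suc.prems by simp
    then have "r\<^sup>*\<^sup>* lo z" using Suc by simp
    moreover have "r z (Suc z)" using assms \<open>lo \<le> z\<close> Suc.prems by simp
    ultimately show ?thesis by simp
  qed
qed

lemma conn_interval:
  assumes "hi \<le> 3^k"
  shows "conn (Ek k) {lo..<hi}"
proof (rule conn_from[of _ _ lo])
  fix x assume x: "x \<in> {lo..<hi}"
  show "(adjR (Ek k) {lo..<hi})\<^sup>*\<^sup>* lo x"
  proof (rule interval_walk[of lo x])
    fix i assume "lo \<le> i" "Suc i \<le> x"
    then show "adjR (Ek k) {lo..<hi} i (Suc i)"
      using x assms path_edge[of i k] unfolding adjR_def by auto
  qed (use x in auto)
qed

lemma conn_union:
  assumes "conn E P" "conn E Q" "p \<in> P" "q \<in> Q" "{p,q} \<in> E"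
  shows "conn E (P \<union> Q)"
proof (rule conn_from[of _ _ p])
  have m1: "(adjR E P)\<^sup>*\<^sup>* \<le> (adjR E (P \<union> Q))\<^sup>*\<^sup>*"
    by (rule rtranclp_mono) (auto simp: adjR_def)
  have m2: "(adjR E Q)\<^sup>*\<^sup>* \<le> (adjR E (P \<union> Q))\<^sup>*\<^sup>*"
    by (rule rtranclp_mono) (auto simp: adjR_def)
  fix x assume "x \<in> P \<union> Q"
  then show "(adjR E (P \<union> Q))\<^sup>*\<^sup>* p x"
  proof
    assume "x \<in> P"
    then have "(adjR E P)\<^sup>*\<^sup>* p x" using assms(1,3) unfolding conn_def by blast
    then show ?thesis using m1 by blast
  next
    assume "x \<in> Q"
    then have "(adjR E Q)\<^sup>*\<^sup>* q x" using assms(2,4) unfolding conn_def by blast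
    then have "(adjR E (P \<union> Q))\<^sup>*\<^sup>* q x" using m2 by blast
    moreover have "adjR E (P \<union> Q) p q" using assms(3,4,5) unfolding adjR_def by auto
    ultimately show ?thesis by (meson converse_rtranclp_into_rtranclp)
  qed
qed

definition blk :: "nat \<Rightarrow> nat \<Rightarrow> nat set" where
  "blk j m = {m*3^j ..< (m+1)*3^j}"

lemma betw3: "betw a b c \<or> betw b a c \<or> betw a c b"
  unfolding betw_def by linarith

lemma blocks:
  assumes pd: "path_decomp {..<3^k} (Ek k) Xs" and k: "k \<ge> 1"
  shows "j \<le> k \<Longrightarrow> (m+1)*3^j \<le> (3::nat)^k \<Longrightarrow> \<exists>i<length Xs. j+1 \<le> card (Xs!i \<inter> blk j m)"
proof (induction j arbitrary: m)
  case 0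
  then have "m \<in> {..<3^k}" by simp
  then obtain i where "i < length Xs" "m \<in> Xs!i" using pd unfolding path_decomp_def by blast
  moreover have "blk 0 m = {m}" unfolding blk_def by auto
  ultimately show ?case by (intro exI[of _ i]) auto
next
  case (Suc j)
  define t :: nat where "t = 3^j"
  have t0: "t \<ge> 1" unfolding t_def by simp
  have m3: "(3*m+3)*t \<le> 3^k" using Suc.prems(2) unfolding t_def by (simp add: algebra_simps)
  have bS: "blk (Suc j) m = {3*m*t ..< (3*m+3)*t}" unfolding blk_def t_def by (simp add: algebra_simps)
  define B1 where "B1 = {3*m*t ..< (3*m+1)*t}"
  define B2 where "B2 = {(3*m+1)*t ..< (3*m+2)*t}"
  define B3 where "B3 = {(3*m+2)*t ..< (3*m+3)*t}"
  have b1: "blk j (3*m) = B1" unfolding blk_def B1_def t_def by (simp add: algebra_simps)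
  have b2: "blk j (3*m+1) = B2" unfolding blk_def B2_def t_def by (simp add: algebra_simps)
  have b3: "blk j (3*m+2) = B3" unfolding blk_def B3_def t_def by (simp add: algebra_simps)
  have o1: "3*m*t \<le> (3*m+1)*t" "(3*m+1)*t \<le> (3*m+2)*t" "(3*m+2)*t \<le> (3*m+3)*t"
    by (simp_all add: algebra_simps)
  have v1: "(3*m+1)*t \<le> 3^k" "(3*m+2)*t \<le> 3^k" using m3 o1 by linarith+
  have ih1: "\<exists>i<length Xs. j+1 \<le> card (Xs!i \<inter> B1)"
    using Suc.IH[of "3*m"] Suc.prems v1 unfolding b1 t_def by (simp add: algebra_simps)
  have ih2: "\<exists>i<length Xs. j+1 \<le> card (Xs!i \<inter> B2)"
    using Suc.IH[of "3*m+1"] Suc.prems v1 unfolding b2 t_def by (simp add: algebra_simps)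
  have ih3: "\<exists>i<length Xs. j+1 \<le> card (Xs!i \<inter> B3)"
    using Suc.IH[of "3*m+2"] Suc.prems m3 unfolding b3 t_def by (simp add: algebra_simps)
  obtain i1 where i1: "i1 < length Xs" "j+1 \<le> card (Xs!i1 \<inter> B1)" using ih1 by blast
  obtain i2 where i2: "i2 < length Xs" "j+1 \<le> card (Xs!i2 \<inter> B2)" using ih2 by blast
  obtain i3 where i3: "i3 < length Xs" "j+1 \<le> card (Xs!i3 \<inter> B3)" using ih3 by blast
  obtain p1 where p1: "p1 \<in> Xs!i1" "p1 \<in> B1" using i1(2) by (metis card.empty disjoint_iff not_one_le_zero le_add2 order_trans)
  obtain p2 where p2: "p2 \<in> Xs!i2" "p2 \<in> B2" using i2(2) by (metis card.empty disjoint_iff not_one_le_zero le_add2 order_trans)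
  obtain p3 where p3: "p3 \<in> Xs!i3" "p3 \<in> B3" using i3(2) by (metis card.empty disjoint_iff not_one_le_zero le_add2 order_trans)
  have BV: "blk (Suc j) m \<subseteq> {..<3^k}" using m3 unfolding bS by auto
  have fB: "finite (blk (Suc j) m)" unfolding bS by simp
  have c12: "conn (Ek k) (B1 \<union> B2)"
  proof -
    have "B1 \<union> B2 = {3*m*t ..< (3*m+2)*t}" unfolding B1_def B2_def using o1 by auto
    then show ?thesis using conn_interval[OF v1(2)] by simp
  qed
  have c23: "conn (Ek k) (B2 \<union> B3)"
  proof -
    have "B2 \<union> B3 = {(3*m+1)*t ..< (3*m+3)*t}" unfolding B3_def B2_def using o1 by auto
    then show ?thesis using conn_interval[OF m3] by simp
  qed
  have cB1: "conn (Ek k) B1" unfolding B1_def by (rule conn_interval[OF v1(1)])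
  have cB3: "conn (Ek k) B3" unfolding B3_def by (rule conn_interval[OF m3])
  have c13: "conn (Ek k) (B1 \<union> B3)"
  proof (cases "Suc j < k")
    case True
    have ch: "chord j m \<in> Ek k"
      unfolding Ek_def chords_def using True m3 unfolding t_def by auto
    have mm: "(3*m+1)*t - 1 \<in> B1" "(3*m+2)*t \<in> B3" unfolding B1_def B3_def using t0
      by (auto simp: algebra_simps)
    have "{(3*m+1)*t - 1, (3*m+2)*t} \<in> Ek k" using ch unfolding chord_def t_def .
    then show ?thesis by (rule conn_union[OF cB1 cB3 mm])
  next
    case False
    then have jk: "Suc j = k" using Suc.prems by simp
    then have "3*t = 3^k" unfolding t_def by (metis power_Suc)
    then have m0: "m = 0" using m3 t0 by (cases m) (auto simp: algebra_simps)
    have mm: "0 \<in> B1" "3^k - 1 \<in> B3" unfolding B1_def B3_def using m0 t0 \<open>3*t = 3^k\<close> by auto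
    show ?thesis by (rule conn_union[OF cB1 cB3 mm close_edge])
  qed
  have BS: "B1 \<union> B2 \<union> B3 = blk (Suc j) m" unfolding bS B1_def B2_def B3_def using o1 by auto
  have d12: "B1 \<inter> B2 = {}" "B1 \<inter> B3 = {}" "B2 \<inter> B3 = {}"
    unfolding B1_def B2_def B3_def using o1 by auto
  have "\<exists>i<length Xs. Suc j + 1 \<le> card (Xs!i \<inter> blk (Suc j) m)"
    using betw3[of i1 i2 i3]
  proof (elim disjE)
    assume b: "betw i1 i2 i3"
    have "j + 1 + 1 \<le> card (Xs!i2 \<inter> blk (Suc j) m)"
      by (rule mid[OF pd _ c13 _ _ fB _ p1(1) i1(1) _ p3(1) i3(1) i2(1) b i2(2)])
         (use BV BS d12 p1 p3 in auto)
    then show ?thesis using i2(1) by auto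
  next
    assume b: "betw i2 i1 i3"
    have "j + 1 + 1 \<le> card (Xs!i1 \<inter> blk (Suc j) m)"
      by (rule mid[OF pd _ c23 _ _ fB _ p2(1) i2(1) _ p3(1) i3(1) i1(1) b i1(2)])
         (use BV BS d12 p2 p3 in auto)
    then show ?thesis using i1(1) by auto
  next
    assume b: "betw i1 i3 i2"
    have "j + 1 + 1 \<le> card (Xs!i3 \<inter> blk (Suc j) m)"
      by (rule mid[OF pd _ c12 _ _ fB _ p1(1) i1(1) _ p2(1) i2(1) i3(1) b i3(2)])
         (use BV BS d12 p1 p2 in auto)
    then show ?thesis using i3(1) by auto
  qed
  then show ?case by simp
qed



lemma Ek_inV: assumes "k \<ge> 1" shows "\<forall>e\<in>Ek k. \<exists>a b. e = {a,b} \<and> a \<in> {..<3^k} \<and> b \<in> {..<3^k}"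
proof
  fix e assume "e \<in> Ek k"
  then obtain a b where "e = {a,b}" "a < b" "b < 3^k" using Ek_bound[OF _ assms] by blast
  then show "\<exists>a b. e = {a,b} \<and> a \<in> {..<3^k} \<and> b \<in> {..<3^k}"
    by (intro exI[of _ a] exI[of _ b]) auto
qed

lemma Ek_fin: assumes "k \<ge> 1" shows "finite (Ek k)"
proof -
  have "Ek k \<subseteq> Pow {..<3^k}"
  proof
    fix e assume "e \<in> Ek k"
    then obtain a b where "e = {a,b}" "a < b" "b < 3^k" using Ek_bound[OF _ assms] by blast
    then show "e \<in> Pow {..<3^k}" by auto
  qed
  then show ?thesis by (rule finite_subset) simp
qed

lemma Ek_simple: assumes "k \<ge> 1" shows "simple_graph {..<3^k} (Ek k)"
  unfolding simple_graph_def
proof (intro conjI ballI)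
  fix e assume "e \<in> Ek k"
  then obtain a b where "e = {a,b}" "a < b" "b < 3^k" using Ek_bound[OF _ assms] by blast
  then show "\<exists>u v. u \<in> {..<3^k} \<and> v \<in> {..<3^k} \<and> u \<noteq> v \<and> e = {u, v}"
    by (intro exI[of _ a] exI[of _ b]) auto
qed simp

lemma Ek_conn: assumes "k \<ge> 1" shows "\<forall>u\<in>{..<3^k}. \<forall>v\<in>{..<3^k}. (adj (Ek k))\<^sup>*\<^sup>* u v"
proof -
  have w: "(adj (Ek k))\<^sup>*\<^sup>* 0 z" if "z < 3^k" for z
  proof (rule interval_walk[of 0 z])
    fix i assume "0 \<le> i" "Suc i \<le> z"
    then show "adj (Ek k) i (Suc i)" using path_edge[of i k] that unfolding adj_def by simp
  qed simp_all
  show ?thesis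
  proof (intro ballI)
    fix u v assume "u \<in> {..<(3::nat)^k}" "v \<in> {..<(3::nat)^k}"
    then have a: "(adj (Ek k))\<^sup>*\<^sup>* 0 u" "(adj (Ek k))\<^sup>*\<^sup>* 0 v" using w by auto
    have "(adj (Ek k))\<^sup>*\<^sup>* u 0" by (rule adj_rt_sym[OF a(1)])
    then show "(adj (Ek k))\<^sup>*\<^sup>* u v" using a(2) by (rule rtranclp_trans)
  qed
qed

lemma Ek_NC: assumes "k \<ge> 1" shows "NC (Ek k)"
  unfolding NC_def using Ek_nc[OF _ _ _ _ _ assms] by blast

lemma ecut_sym:
  assumes "\<forall>e\<in>E. \<exists>a b. e = {a,b} \<and> a \<in> V \<and> b \<in> V" "T \<subseteq> V"
  shows "ecut E T = ecut E (V - T)"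
proof -
  have inV: "\<And>p q. {p,q} \<in> E \<Longrightarrow> p \<in> V \<and> q \<in> V"
    using assms(1) by (metis doubleton_eq_iff)
  show ?thesis
  proof (intro equalityI subsetI)
    fix e assume "e \<in> ecut E T"
    then obtain p q where pq: "e \<in> E" "e = {p,q}" "p \<in> T" "q \<notin> T" unfolding ecut_def by blast
    then have "q \<in> V - T" "p \<notin> V - T" "e = {q,p}" using inV by (auto simp: insert_commute)
    then show "e \<in> ecut E (V - T)" unfolding ecut_def using pq(1) by blast
  next
    fix e assume "e \<in> ecut E (V - T)"
    then obtain p q where pq: "e \<in> E" "e = {p,q}" "p \<in> V - T" "q \<notin> V - T" unfolding ecut_def by blast
    then have "q \<in> T" "p \<notin> T" "e = {q,p}" using inV by (auto simp: insert_commute)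
    then show "e \<in> ecut E T" unfolding ecut_def using pq(1) by blast
  qed
qed

lemma bond_card:
  assumes k: "k \<ge> 1" and b: "bond {..<3^k} (Ek k) F"
  shows "card F \<le> 2*k"
proof -
  let ?V = "{..<(3::nat)^k}"
  obtain T where T: "T \<subseteq> ?V" "T \<noteq> {}" "?V - T \<noteq> {}" "conn (Ek k) T" "conn (Ek k) (?V - T)"
    "F = ecut (Ek k) T"
  proof -
    have ne: "?V \<noteq> {}" using lessThan_iff[of 0 "3^k"] by (metis empty_iff zero_less_numeral zero_less_power)
    show ?thesis using bond_cut[OF Ek_inV[OF k] finite_lessThan ne Ek_conn[OF k] b] that by blast
  qed
  have nc: "NC (Ek k)" by (rule Ek_NC[OF k])
  show ?thesis
  proof (cases "0 \<in> T")
    case False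
    obtain x y where "T = {x..y}" "1 \<le> x" "x \<le> y" "y < 3^k"
      using arc[OF nc T(4) T(5) T(1) False T(2)] by blast
    then show ?thesis using T(6) cut_interval[OF k] by simp
  next
    case True
    have eq: "?V - (?V - T) = T" using T(1) by auto
    have "0 \<notin> ?V - T" using True by simp
    then obtain x y where xy: "?V - T = {x..y}" "1 \<le> x" "x \<le> y" "y < 3^k"
    proof -
      have cB: "conn (Ek k) (?V - (?V - T))" using T(4) eq by simp
      have "?V - T \<subseteq> ?V" by blast
      from arc[OF nc T(5) cB this \<open>0 \<notin> ?V - T\<close> T(3)] show ?thesis using that by blast
    qed
    have "F = ecut (Ek k) (?V - T)" using T(6) ecut_sym[OF Ek_inV[OF k] T(1)] by simp
    then show ?thesis using xy cut_interval[OF k] by simp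
  qed
qed

lemma Ek_cocirc: assumes k: "k \<ge> 1" shows "cocircumference {..<3^k} (Ek k) \<le> 2*k"
proof -
  have "{card F | F. bond {..<3^k} (Ek k) F} \<subseteq> card ` Pow (Ek k)"
    unfolding bond_def separating_def by auto
  then have fin: "finite {card F | F. bond {..<3^k} (Ek k) F}"
    using Ek_fin[OF k] finite_subset by blast
  show ?thesis unfolding cocircumference_def
    using fin bond_card[OF k] by (subst Max_le_iff) auto
qed

lemma Ek_pw: assumes k: "k \<ge> 1" shows "k \<le> pathwidth {..<3^k} (Ek k)"
proof -
  let ?V = "{..<(3::nat)^k}"
  have pd1: "path_decomp ?V (Ek k) [?V]"
  proof -
    have inV: "\<And>p q. {p,q} \<in> Ek k \<Longrightarrow> p \<in> ?V \<and> q \<in> ?V"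
      using Ek_inV[OF k] by (metis doubleton_eq_iff)
    show ?thesis unfolding path_decomp_def
    proof (intro conjI ballI allI impI)
      fix u v assume "{u,v} \<in> Ek k"
      then show "\<exists>i<length [?V]. u \<in> [?V] ! i \<and> v \<in> [?V] ! i" using inV by auto
    qed auto
  qed
  have ex: "\<exists>w Xs. path_decomp ?V (Ek k) Xs \<and> pd_width Xs = w" using pd1 by blast
  show ?thesis unfolding pathwidth_def
  proof (rule LeastI2_ex[OF ex])
    fix w assume "\<exists>Xs. path_decomp ?V (Ek k) Xs \<and> pd_width Xs = w"
    then obtain Xs where Xs: "path_decomp ?V (Ek k) Xs" "pd_width Xs = w" by blast
    have "blk k 0 = ?V" unfolding blk_def by auto
    then obtain i where i: "i < length Xs" "k+1 \<le> card (Xs!i \<inter> ?V)"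
      using blocks[OF Xs(1) k, of k 0] by auto
    have "Xs!i \<subseteq> ?V" using Xs(1) i(1) unfolding path_decomp_def by auto
    then have "card (Xs!i \<inter> ?V) = card (Xs!i)" by (simp add: Int_absorb2)
    moreover have "card (Xs!i) \<le> Max (card ` set Xs)" using i(1) by (intro Max_ge) auto
    ultimately show "k \<le> w" using Xs(2) i(2) unfolding pd_width_def by linarith
  qed
qed

lemma walk_avoid:
  assumes "lo \<le> z" "z < 3^k" "\<And>i. lo \<le> i \<Longrightarrow> i < z \<Longrightarrow> i \<notin> X \<and> Suc i \<notin> X"
  shows "(adj (del_verts_E (Ek k) X))\<^sup>*\<^sup>* lo z"
proof (rule interval_walk[of lo z])
  fix i assume "lo \<le> i" "Suc i \<le> z"
  then show "adj (del_verts_E (Ek k) X) i (Suc i)"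
    using path_edge[of i k] assms unfolding adj_def del_verts_E_def by auto
qed (use assms in simp_all)

lemma Ek_2conn: assumes k: "k \<ge> 1" shows "two_connected {..<3^k} (Ek k)"
proof -
  let ?V = "{..<(3::nat)^k}"
  have k3: "3 \<le> (3::nat)^k" by (rule three_le_pow[OF k])
  have "card ?V > 2" using k3 by simp
  moreover have "connected_graph (?V - X) (del_verts_E (Ek k) X)" if X: "X \<subseteq> ?V" "card X < 2" for X
  proof -
    let ?E = "del_verts_E (Ek k) X"
    have fX: "finite X" using X(1) finite_subset by blast
    have hub: "\<exists>h. \<forall>u\<in>?V - X. (adj ?E)\<^sup>*\<^sup>* u h"
    proof (cases "X = {}")
      case True
      have "(adj ?E)\<^sup>*\<^sup>* u 0" if "u \<in> ?V - X" for u
        by (rule adj_rt_sym, rule walk_avoid) (use that True in auto)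
      then show ?thesis by blast
    next
      case False
      then have "card X \<noteq> 0" using fX by simp
      then have "card X = 1" using X(2) by simp
      then obtain w where Xw: "X = {w}" by (rule card_1_singletonE)
      show ?thesis
      proof (cases "w = 0")
        case True
        have "(adj ?E)\<^sup>*\<^sup>* u 1" if "u \<in> ?V - X" for u
          by (rule adj_rt_sym, rule walk_avoid) (use that True Xw in auto)
        then show ?thesis by blast
      next
        case w0: False
        have "(adj ?E)\<^sup>*\<^sup>* u 0" if u: "u \<in> ?V - X" for u
        proof (cases "u < w")
          case True
          show ?thesis by (rule adj_rt_sym, rule walk_avoid) (use u Xw True in auto)
        next
          case False
          then have uw: "w < u" using u Xw by auto
          have "(adj ?E)\<^sup>*\<^sup>* u (3^k - 1)" using walk_avoid[of u "3^k - 1" k X] u Xw uw by auto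
          moreover have "adj ?E (3^k - 1) 0"
          proof -
            have "w \<noteq> 3^k - 1" using uw u by auto
            then have "{0, 3^k - 1} \<in> ?E" using close_edge[of k] w0 Xw unfolding del_verts_E_def by auto
            then show ?thesis unfolding adj_def by (simp add: insert_commute)
          qed
          ultimately show ?thesis by simp
        qed
        then show ?thesis by blast
      qed
    qed
    then obtain h where h: "\<forall>u\<in>?V - X. (adj ?E)\<^sup>*\<^sup>* u h" by blast
    have "?V - X \<noteq> {}"
    proof
      assume "?V - X = {}"
      then have "?V \<subseteq> X" by blast
      then have "card ?V \<le> card X" using fX card_mono by blast
      then show False using X(2) k3 by simp
    qed
    moreover have "reach (?V - X) ?E u v" if "u \<in> ?V - X" "v \<in> ?V - X" for u v
    proof -
      have a: "(adj ?E)\<^sup>*\<^sup>* u h" "(adj ?E)\<^sup>*\<^sup>* v h" using h that by auto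
      have "(adj ?E)\<^sup>*\<^sup>* h v" by (rule adj_rt_sym[OF a(2)])
      with a(1) have "(adj ?E)\<^sup>*\<^sup>* u v" by (rule rtranclp_trans)
      then show ?thesis unfolding reach_def using that by simp
    qed
    ultimately show ?thesis unfolding connected_graph_def by blast
  qed
  ultimately show ?thesis unfolding two_connected_def by blast
qed

theorem theorem1p5:
  fixes k :: nat
  assumes "k \<ge> 1"
  shows "\<exists>(V :: nat set) E. simple_graph V E \<and> two_connected V E \<and>
           pathwidth V E \<ge> k \<and> cocircumference V E \<le> 2 * k"
  using Ek_simple[OF assms] Ek_2conn[OF assms] Ek_pw[OF assms] Ek_cocirc[OF assms] by blast

end
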